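(* Let $G$ be a group in which every non-abelian subgroup $H$ satisfies $C_G(H)\le H$, and let $a\in G$ be a non-trivial element of infinite or odd order. If $x\in G$ satisfies $x^{-1}ax=a^{-1}$, then $x$ has finite order which is a power of $2$, and $C_G(\langle a,x\rangle)=\langle x^2\rangle$.
   Context: $C_G(H)$ denotes the centralizer of $H$ in $G$. *)

theory Defs
  imports "HOL-Algebra.Algebra"
begin

definition centralizer :: "('a, 'b) monoid_scheme \<Rightarrow> 'a set \<Rightarrow> 'a set" where
  "centralizer G H = {g \<in> carrier G. \<forall>h\<in>H. g \<otimes>\<^bsub>G\<^esub> h = h \<otimes>\<^bsub>G\<^esub> g}"

end

theory Submission
  imports Defs
begin
context group begin
lemma conj_int_pow:
  assumes g: "g \<in> carrier G" and b: "b \<in> carrier G"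
  shows "g \<otimes> b [^] (k::int) \<otimes> inv g = (g \<otimes> b \<otimes> inv g) [^] k"
proof -
  have h: "(\<lambda>z. g \<otimes> z \<otimes> inv g) \<in> hom G G"
    unfolding hom_def using g
    by (auto simp: m_assoc[symmetric]) (simp add: m_assoc)
  show ?thesis using hom_int_pow[OF h b group_axioms group_axioms] by simp
qed
lemma sgn_pow_conj:
  assumes y: "y \<in> carrier G" and a: "a \<in> carrier G" and r: "y \<otimes> a = inv a \<otimes> y"
  shows "y [^] (j::int) \<otimes> a \<otimes> inv (y [^] j) = a [^] (if even j then 1 else -1::int)"
proof -
  have y1: "y \<otimes> a \<otimes> inv y = inv a" using r y a
    by (simp add: inv_solve_right')
  have nat: "y [^] (n::nat) \<otimes> a \<otimes> inv (y [^] n) = a [^] (if even n then 1 else -1::int)" for n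
  proof (induction n)
    case 0 then show ?case using a by simp
  next
    case (Suc n)
    have "y [^] Suc n \<otimes> a \<otimes> inv (y [^] Suc n)
        = y \<otimes> (y [^] n \<otimes> a \<otimes> inv (y [^] n)) \<otimes> inv y"
      unfolding nat_pow_Suc2[OF y] using y a by (simp add: inv_mult_group m_assoc)
    also have "\<dots> = y \<otimes> a [^] (if even n then 1 else -1::int) \<otimes> inv y" using Suc by simp
    also have "\<dots> = (y \<otimes> a \<otimes> inv y) [^] (if even n then 1 else -1::int)"
      by (rule conj_int_pow[OF y a])
    also have "\<dots> = (inv a) [^] (if even n then 1 else -1::int)"
      by (simp only: y1)
    also have "\<dots> = a [^] (if even (Suc n) then 1 else -1::int)"
      using a by (cases "even n") (simp_all add: int_pow_neg)
    finally show ?case .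
  qed
  show ?thesis
  proof (cases "j \<ge> 0")
    case True
    then obtain n where "j = int n" by (metis nonneg_eq_int)
    then show ?thesis using nat[of n] by (simp add: int_pow_int)
  next
    case False
    define n where "n = nat (-j)"
    have jn: "j = - int n" using False n_def by simp
    define s where "s = (if even n then 1 else -1::int)"
    have ss: "s * s = 1" by (simp add: s_def)
    define z where "z = y [^] n"
    have z: "z \<in> carrier G" using y z_def by simp
    have e: "z \<otimes> a \<otimes> inv z = a [^] s" using nat[of n] unfolding s_def z_def .
    have "z \<otimes> a = a [^] s \<otimes> z" using e z a
      by (simp add: inv_solve_right')
    then have "a = inv z \<otimes> (a [^] s \<otimes> z)" using z a
      by (simp add: inv_solve_left)
    then have "a = inv z \<otimes> a [^] s \<otimes> z" using z a by (simp add: m_assoc)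
    also have "\<dots> = inv z \<otimes> a [^] s \<otimes> inv (inv z)" using z by simp
    also have "\<dots> = (inv z \<otimes> a \<otimes> inv (inv z)) [^] s"
      by (rule conj_int_pow) (use z a in auto)
    also have "\<dots> = (inv z \<otimes> a \<otimes> z) [^] s" using z by simp
    finally have "a [^] s = ((inv z \<otimes> a \<otimes> z) [^] s) [^] s" by simp
    also have "\<dots> = (inv z \<otimes> a \<otimes> z) [^] (s * s)" by (rule int_pow_pow) (use z a in auto)
    also have "\<dots> = inv z \<otimes> a \<otimes> z" unfolding ss using z a by simp
    finally have "inv z \<otimes> a \<otimes> z = a [^] s" by simp
    moreover have "y [^] j = inv z" using jn y z_def by (simp add: int_pow_neg_int)
    moreover have "even j = even n" using jn by simp
    ultimately show ?thesis using z by (simp add: s_def)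
  qed
qed

lemma comm_form:
  assumes y: "y \<in> carrier G" and a: "a \<in> carrier G" and r: "y \<otimes> a = inv a \<otimes> y"
  shows "y [^] (j::int) \<otimes> a [^] (k::int) = a [^] ((if even j then 1 else -1) * k) \<otimes> y [^] j"
proof -
  have yj: "y [^] j \<in> carrier G" using y by simp
  have "y [^] j \<otimes> a [^] k \<otimes> inv (y [^] j) = a [^] ((if even j then 1 else -1) * k)"
    using conj_int_pow[OF yj a, of k] sgn_pow_conj[OF y a r, of j] a
    by (simp add: int_pow_pow)
  then show ?thesis using yj a
    by (simp add: inv_solve_right')
qed


lemma gen_sub:
  assumes y: "y \<in> carrier G" and a: "a \<in> carrier G" and r: "y \<otimes> a = inv a \<otimes> y"
  shows "generate G {a, y} \<subseteq> {g. \<exists>(i::int) (j::int). g = a [^] i \<otimes> y [^] j}"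
proof
  fix h assume "h \<in> generate G {a, y}"
  then show "h \<in> {g. \<exists>(i::int) (j::int). g = a [^] i \<otimes> y [^] j}"
  proof induction
    case one
    have "\<one> = a [^] (0::int) \<otimes> y [^] (0::int)" using a y by simp
    then show ?case by blast
  next
    case (incl h)
    have 1: "a = a [^] (1::int) \<otimes> y [^] (0::int)" using a y by simp
    have 2: "y = a [^] (0::int) \<otimes> y [^] (1::int)" using a y by simp
    from incl 1 2 show ?case by blast
  next
    case (inv h)
    have 1: "inv a = a [^] (-1::int) \<otimes> y [^] (0::int)" using a y by (simp add: int_pow_neg)
    have 2: "inv y = a [^] (0::int) \<otimes> y [^] (-1::int)" using a y by (simp add: int_pow_neg)
    from inv 1 2 show ?case by blast
  next
    case (eng h1 h2)
    then obtain i j k l :: int where h1: "h1 = a [^] i \<otimes> y [^] j" and h2: "h2 = a [^] k \<otimes> y [^] l"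
      by blast
    define s where "s = (if even j then 1 else -1::int)"
    have "h1 \<otimes> h2 = a [^] i \<otimes> (y [^] j \<otimes> a [^] k) \<otimes> y [^] l"
      using h1 h2 a y by (simp add: m_assoc)
    also have "\<dots> = a [^] i \<otimes> (a [^] (s * k) \<otimes> y [^] j) \<otimes> y [^] l"
      using comm_form[OF y a r, of j k] s_def by simp
    also have "\<dots> = a [^] (i + s * k) \<otimes> y [^] (j + l)"
      using a y by (simp add: m_assoc int_pow_mult)
    finally show ?case by blast
  qed
qed

lemma odd_dvd2:
  assumes "n = 0 \<or> odd n" and "int n dvd 2 * (i::int)"
  shows "int n dvd i"
proof (cases "n = 0")
  case True then show ?thesis using assms by simp
next
  case False
  then have "odd (int n)" using assms by simp
  then have "coprime (int n) 2" by (simp add: coprime_commute)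
  then show ?thesis using assms(2) by (simp add: coprime_dvd_mult_right_iff)
qed

lemma lemmaA:
  assumes hyp: "\<And>H. subgroup H G \<Longrightarrow> \<not> (\<forall>h\<in>H. \<forall>k\<in>H. h \<otimes> k = k \<otimes> h)
            \<Longrightarrow> centralizer G H \<subseteq> H"
    and a: "a \<in> carrier G" and a1: "a \<noteq> \<one>" and ao: "ord a = 0 \<or> odd (ord a)"
    and y: "y \<in> carrier G" and r: "y \<otimes> a = inv a \<otimes> y"
  shows "centralizer G (generate G {a, y}) = generate G {y [^] (2::nat)}"
proof -
  define H where "H = generate G {a, y}"
  have Hsub: "subgroup H G" unfolding H_def by (rule generate_is_subgroup) (use a y in auto)
  have aH: "a \<in> H" and yH: "y \<in> H" unfolding H_def by (auto intro: generate.incl)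
  have HS: "H \<subseteq> {g. \<exists>(i::int) (j::int). g = a [^] i \<otimes> y [^] j}" unfolding H_def by (rule gen_sub[OF y a r])
  have pw1: "a [^] i = \<one>" if "int (ord a) dvd 2 * i" for i :: int
    using odd_dvd2[OF ao that] a by (simp add: int_pow_eq_id)
  have nai: "a \<noteq> inv a"
  proof
    assume "a = inv a"
    then have "a [^] (1::int) = a [^] (-1::int)" using a by (simp add: int_pow_neg)
    then have "int (ord a) dvd (-1 - 1)" using int_pow_eq[OF a] by blast
    then have "int (ord a) dvd 2 * (-1)" by simp
    then have "a [^] (-1::int) = \<one>" using pw1 by simp
    then show False using a a1 by (simp add: int_pow_neg)
  qed
  have nonab: "\<not> (\<forall>h\<in>H. \<forall>k\<in>H. h \<otimes> k = k \<otimes> h)"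
  proof
    assume "\<forall>h\<in>H. \<forall>k\<in>H. h \<otimes> k = k \<otimes> h"
    then have "a \<otimes> y = inv a \<otimes> y" using aH yH r by auto
    then have "a = inv a" using a y by simp
    then show False using nai by simp
  qed
  have CH: "centralizer G H \<subseteq> H" by (rule hyp[OF Hsub nonab])
  have y2: "y [^] (2::nat) = y [^] (2::int)" by (simp add: int_pow_int[symmetric])
  have gen2: "generate G {y [^] (2::nat)} = {y [^] (2 * l) | l::int. True}"
    using generate_pow[of "y [^] (2::nat)"] y unfolding y2 by (auto simp: int_pow_pow)
  show ?thesis
    unfolding H_def[symmetric] gen2
  proof
    show "centralizer G H \<subseteq> {y [^] (2 * l) | l::int. True}"
    proof
      fix c assume cC: "c \<in> centralizer G H"
      then have c: "c \<in> carrier G" and cc: "\<And>h. h \<in> H \<Longrightarrow> c \<otimes> h = h \<otimes> c"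
        unfolding centralizer_def by auto
      from cC CH HS obtain i j :: int where cij: "c = a [^] i \<otimes> y [^] j" by blast
      have "c \<otimes> y = y \<otimes> c" using cc yH by simp
      moreover have "c \<otimes> y = a [^] i \<otimes> (y \<otimes> y [^] j)"
        using cij a y int_pow_mult[OF y, of j 1] int_pow_mult[OF y, of 1 j]
        by (simp add: m_assoc add.commute)
      moreover have "y \<otimes> c = a [^] ((- 1) * i) \<otimes> (y \<otimes> y [^] j)"
        using cij a y comm_form[OF y a r, of 1 i] by (simp add: m_assoc[symmetric])
      ultimately have "a [^] i = a [^] ((- 1) * i)" using a y by simp
      then have "int (ord a) dvd ((- 1) * i - i)" using int_pow_eq[OF a] by blast
      then have "int (ord a) dvd 2 * (- i)" by (simp add: algebra_simps)
      then have "a [^] (- i) = \<one>" by (rule pw1)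
      then have ai: "a [^] i = \<one>" using a by (simp add: int_pow_neg)
      have cj: "c = y [^] j" using cij ai y by simp
      have "c \<otimes> a = a \<otimes> c" using cc aH by simp
      moreover have "c \<otimes> a = a [^] ((if even j then 1 else -1::int) * 1) \<otimes> y [^] j"
        using comm_form[OF y a r, of j 1] cj a y by (cases "even j") simp_all
      ultimately have "a [^] ((if even j then 1 else -1::int) * 1) = a" using cj a y by simp
      then have "even j" using nai a by (auto split: if_splits simp: int_pow_neg)
      then obtain l :: int where "j = 2 * l" by blast
      then show "c \<in> {y [^] (2 * l) | l::int. True}" using cj by blast
    qed
  next
    show "{y [^] (2 * l) | l::int. True} \<subseteq> centralizer G H"
    proof
      fix h assume "h \<in> {y [^] (2 * l) | l::int. True}"
      then obtain l :: int where hl: "h = y [^] (2 * l)" by blast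
      have "h \<otimes> g = g \<otimes> h" if "g \<in> H" for g
      proof -
        from that HS obtain i j :: int where g: "g = a [^] i \<otimes> y [^] j" by blast
        have "h \<otimes> g = (y [^] (2 * l) \<otimes> a [^] i) \<otimes> y [^] j" using hl g a y by (simp add: m_assoc)
        also have "\<dots> = a [^] i \<otimes> y [^] (2 * l + j)"
          using comm_form[OF y a r, of "2 * l" i] a y by (simp add: m_assoc int_pow_mult)
        also have "\<dots> = g \<otimes> h" using hl g a y by (simp add: m_assoc int_pow_mult[symmetric] add.commute)
        finally show ?thesis .
      qed
      then show "h \<in> centralizer G H" using hl y unfolding centralizer_def by auto
    qed
  qed
qed
end

lemma pow2_lemma:
  fixes n :: nat
  assumes "n > 0" and "\<And>q. odd q \<Longrightarrow> q dvd n \<Longrightarrow> q = 1"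
  shows "\<exists>k. n = 2 ^ k"
  using assms
proof (induction n rule: less_induct)
  case (less n)
  show ?case
  proof (cases "even n")
    case True
    then obtain m where m: "n = 2 * m" by blast
    have "m > 0" using less.prems m by simp
    moreover have "q = 1" if "odd q" "q dvd m" for q
      using less.prems(2)[OF that(1)] that(2) m by simp
    ultimately obtain k where "m = 2 ^ k" using less.IH[of m] m less.prems by force
    then have "n = 2 ^ Suc k" using m by simp
    then show ?thesis by blast
  next
    case False
    then have "n = 1" using less.prems(2)[of n] by simp
    then show ?thesis by (intro exI[of _ 0]) simp
  qed
qed

theorem lemma2p6:
  fixes G (structure) and a x :: 'a
  assumes "group G"
    and "\<And>H. subgroup H G \<Longrightarrow> \<not> (\<forall>h\<in>H. \<forall>k\<in>H. h \<otimes> k = k \<otimes> h)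
            \<Longrightarrow> centralizer G H \<subseteq> H"
    and "a \<in> carrier G" and "a \<noteq> \<one>"
    and "group.ord G a = 0 \<or> odd (group.ord G a)"
    and "x \<in> carrier G"
    and "inv x \<otimes> a \<otimes> x = inv a"
  shows "group.ord G x \<noteq> 0 \<and> (\<exists>k::nat. group.ord G x = 2 ^ k)
         \<and> centralizer G (generate G {a, x}) = generate G {x [^] (2::nat)}"
proof -
  interpret group G by fact
  note hyp = assms(2)
  have a: "a \<in> carrier G" and x: "x \<in> carrier G" using assms by auto
  have "inv (inv x \<otimes> a \<otimes> x) = inv (inv a)" using assms(7) by simp
  then have "inv x \<otimes> inv a \<otimes> x = a" using a x by (simp add: inv_mult_group m_assoc)
  then have "inv x \<otimes> (inv a \<otimes> x) = a" using a x by (simp add: m_assoc)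
  then have "inv a \<otimes> x = x \<otimes> a" using a x by (simp add: inv_solve_left')
  then have r: "x \<otimes> a = inv a \<otimes> x" by simp
  have C: "centralizer G (generate G {a, x}) = generate G {x [^] (2::nat)}"
    by (rule lemmaA[OF hyp a assms(4) assms(5) x r])
  have key: "\<exists>l::int. int (ord x) dvd (2 * int m * l - 2)" if m: "odd m" for m :: nat
  proof -
    define y where "y = x [^] (int m)"
    have y: "y \<in> carrier G" using x y_def by simp
    have ry: "y \<otimes> a = inv a \<otimes> y"
      using comm_form[OF x a r, of "int m" 1] m a x unfolding y_def by (simp add: int_pow_neg)
    have x2: "x [^] (2::int) \<in> centralizer G (generate G {a, y})"
      unfolding centralizer_def
    proof (intro CollectI conjI ballI)
      show "x [^] (2::int) \<in> carrier G" using x by simp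
    next
      fix g assume "g \<in> generate G {a, y}"
      then obtain i j :: int where g: "g = a [^] i \<otimes> y [^] j" using gen_sub[OF y a ry] by blast
      have yj: "y [^] j = x [^] (int m * j)" unfolding y_def using x by (simp add: int_pow_pow)
      have "x [^] (2::int) \<otimes> g = (x [^] (2::int) \<otimes> a [^] i) \<otimes> x [^] (int m * j)"
        using g yj a x by (simp add: m_assoc)
      also have "\<dots> = a [^] i \<otimes> x [^] (2 + int m * j)"
        using comm_form[OF x a r, of 2 i] a x by (simp add: m_assoc int_pow_mult)
      also have "\<dots> = g \<otimes> x [^] (2::int)" using g yj a x
        by (simp add: m_assoc int_pow_mult[symmetric] add.commute)
      finally show "x [^] (2::int) \<otimes> g = g \<otimes> x [^] (2::int)" .
    qed
    have y2: "y [^] (2::nat) = y [^] (2::int)" by (simp add: int_pow_int[symmetric])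
    have "x [^] (2::int) \<in> generate G {y [^] (2::nat)}"
      using x2 lemmaA[OF hyp a assms(4) assms(5) y ry] by simp
    then obtain l :: int where "x [^] (2::int) = (y [^] (2::int)) [^] l"
      using generate_pow[of "y [^] (2::nat)"] y unfolding y2 by auto
    also have "\<dots> = x [^] (2 * int m * l)" unfolding y_def using x
      by (simp add: int_pow_pow mult.commute mult.left_commute)
    finally have "int (ord x) dvd (2 * int m * l - 2)" using int_pow_eq[OF x] by blast
    then show ?thesis by blast
  qed
  have o0: "ord x \<noteq> 0"
  proof
    assume o: "ord x = 0"
    obtain l :: int where "int (ord x) dvd (2 * int 3 * l - 2)" using key[of 3] by auto
    then have "2 * 3 * l - 2 = 0" using o by simp
    then show False by presburger
  qed
  have "q = 1" if q: "odd q" "q dvd ord x" for q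
  proof -
    obtain l :: int where l: "int (ord x) dvd (2 * int q * l - 2)" using key[OF q(1)] by blast
    have "int q dvd int (ord x)" using q(2) by simp
    then have "int q dvd (2 * int q * l - 2)" using l by (rule dvd_trans)
    moreover have "2 * int q * l - 2 = 2 * (int q * l - 1)" by (simp add: algebra_simps)
    ultimately have "int q dvd 2 * (int q * l - 1)" by simp
    then have "int q dvd (int q * l - 1)" using odd_dvd2[of q] q(1) by blast
    from dvd_diff[OF dvd_triv_left[of "int q" l] this] have "int q dvd 1" by simp
    then show "q = 1" by simp
  qed
  then have "\<exists>k. ord x = 2 ^ k" using pow2_lemma[of "ord x"] o0 by blast
  then show ?thesis using o0 C by blast
qed

end
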